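(* The Riemannian manifold $(\mathbb{R}^2,\,e^{\,y-x^2}(dx^2+dy^2))$ admits no non-constant equilibrium function, and hence no equilibrium partition.
   Context: For a metric $h$ on $\mathbb{R}^2$, a real-analytic function $I:\mathbb{R}^2\to\mathbb{R}$ is an equilibrium function of $(\mathbb{R}^2,h)$ if $(\nabla_h I)^2$ and $\Delta_h I$ are constant on each connected component of each level set of $I$. Here $\nabla_h$ is the gradient of $h$ and $\Delta_h$ is the Laplace–Beltrami operator of $h$. *)

theory Defs
  imports "HOL-Analysis.Analysis"
begin

text \<open>Real-analytic functions on the plane: near every point the function is the sum
of an (absolutely, i.e. unconditionally) convergent double power series.\<close>
definition real_analytic2 :: "(real \<times> real \<Rightarrow> real) \<Rightarrow> bool" where
  "real_analytic2 f \<longleftrightarrow>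
     (\<forall>a b. \<exists>r>0. \<exists>c :: nat \<times> nat \<Rightarrow> real.
        \<forall>x y. dist (x, y) (a, b) < r \<longrightarrow>
          ((\<lambda>(m, n). c (m, n) * (x - a) ^ m * (y - b) ^ n) has_sum f (x, y)) UNIV)"

definition pdx :: "(real \<times> real \<Rightarrow> real) \<Rightarrow> real \<times> real \<Rightarrow> real" where
  "pdx f = (\<lambda>(x, y). deriv (\<lambda>t. f (t, y)) x)"

definition pdy :: "(real \<times> real \<Rightarrow> real) \<Rightarrow> real \<times> real \<Rightarrow> real" where
  "pdy f = (\<lambda>(x, y). deriv (\<lambda>t. f (x, t)) y)"

text \<open>A Riemannian metric h = E dx^2 + 2 F dx dy + G dy^2 on the plane, given by its
coefficient functions.  det h = E G - F^2; inverse metric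
(g^11, g^12, g^22) = (G, -F, E) / det h.\<close>

definition metric_det :: "(real \<times> real \<Rightarrow> real) \<Rightarrow> (real \<times> real \<Rightarrow> real) \<Rightarrow> (real \<times> real \<Rightarrow> real)
    \<Rightarrow> real \<times> real \<Rightarrow> real" where
  "metric_det E F G = (\<lambda>p. E p * G p - (F p)\<^sup>2)"

definition grad_sq :: "(real \<times> real \<Rightarrow> real) \<Rightarrow> (real \<times> real \<Rightarrow> real) \<Rightarrow> (real \<times> real \<Rightarrow> real)
    \<Rightarrow> (real \<times> real \<Rightarrow> real) \<Rightarrow> real \<times> real \<Rightarrow> real" where
  "grad_sq E F G I = (\<lambda>p.
     (G p * (pdx I p)\<^sup>2 - 2 * F p * pdx I p * pdy I p + E p * (pdy I p)\<^sup>2)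
       / metric_det E F G p)"

definition laplace_beltrami :: "(real \<times> real \<Rightarrow> real) \<Rightarrow> (real \<times> real \<Rightarrow> real) \<Rightarrow> (real \<times> real \<Rightarrow> real)
    \<Rightarrow> (real \<times> real \<Rightarrow> real) \<Rightarrow> real \<times> real \<Rightarrow> real" where
  "laplace_beltrami E F G I = (\<lambda>p.
     (pdx (\<lambda>q. sqrt (metric_det E F G q) *
              ((G q * pdx I q - F q * pdy I q) / metric_det E F G q)) p
    + pdy (\<lambda>q. sqrt (metric_det E F G q) *
              ((- F q * pdx I q + E q * pdy I q) / metric_det E F G q)) p)
     / sqrt (metric_det E F G p))"

definition equilibrium_function :: "(real \<times> real \<Rightarrow> real) \<Rightarrow> (real \<times> real \<Rightarrow> real)
    \<Rightarrow> (real \<times> real \<Rightarrow> real) \<Rightarrow> (real \<times> real \<Rightarrow> real) \<Rightarrow> bool" where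
  "equilibrium_function E F G I \<longleftrightarrow>
     real_analytic2 I \<and>
     (\<forall>c p q. p \<in> {z. I z = c} \<longrightarrow> q \<in> connected_component_set {z. I z = c} p \<longrightarrow>
        grad_sq E F G I q = grad_sq E F G I p \<and>
        laplace_beltrami E F G I q = laplace_beltrami E F G I p)"

end

theory Submission
  imports Defs
begin

lemma geo_has_sum: "0 \<le> (z::real) \<Longrightarrow> z < 1 \<Longrightarrow> ((\<lambda>n. z^n) has_sum (1/(1-z))) UNIV"
  by (rule sums_nonneg_imp_has_sum[OF geometric_sums]) auto

lemma geo2_has_sum:
  fixes \<alpha> \<beta> :: real
  assumes "0 \<le> \<alpha>" "\<alpha> < 1" "0 \<le> \<beta>" "\<beta> < 1"
  shows "((\<lambda>(m,n). \<alpha>^m * \<beta>^n) has_sum (1/(1-\<alpha>) * (1/(1-\<beta>)))) UNIV"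
proof -
  have inner: "((\<lambda>n. \<alpha>^m * \<beta>^n) has_sum (\<alpha>^m * (1/(1-\<beta>)))) UNIV" for m
    by (rule has_sum_cmult_right[OF geo_has_sum]) (use assms in auto)
  have outer: "((\<lambda>m. \<alpha>^m * (1/(1-\<beta>))) has_sum (1/(1-\<alpha>) * (1/(1-\<beta>)))) UNIV"
    by (rule has_sum_cmult_left[OF geo_has_sum]) (use assms in auto)
  have summ: "(\<lambda>(m,n). \<alpha>^m * \<beta>^n) summable_on Sigma UNIV (\<lambda>_. UNIV)"
    apply (rule summable_on_SigmaI[where g="\<lambda>m. \<alpha>^m * (1/(1-\<beta>))"])
    using inner has_sum_imp_summable[OF outer] assms by auto
  have "((\<lambda>(m,n). \<alpha>^m * \<beta>^n) has_sum (1/(1-\<alpha>) * (1/(1-\<beta>)))) (Sigma UNIV (\<lambda>_. UNIV))"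
    by (rule has_sum_SigmaI[OF _ outer summ]) (use inner in auto)
  then show ?thesis by simp
qed

definition bnd :: "(nat \<times> nat \<Rightarrow> real) \<Rightarrow> real \<Rightarrow> real \<Rightarrow> bool" where
  "bnd c r M \<longleftrightarrow> (\<forall>m n. \<bar>c (m,n)\<bar> \<le> M / r^(m+n))"

lemma bnd_abs_summable:
  assumes "bnd c r M" "0 < r" "\<bar>X\<bar> < r" "\<bar>Y\<bar> < r"
  shows "(\<lambda>k. norm ((\<lambda>(m,n). c (m,n) * X^m * Y^n) k)) summable_on UNIV"
proof -
  have M: "0 \<le> M" using assms(1,2) unfolding bnd_def
    by (metis abs_ge_zero order_trans zero_le_divide_iff zero_less_power not_le)
  have g: "((\<lambda>(m,n). M * ((\<bar>X\<bar>/r)^m * (\<bar>Y\<bar>/r)^n)) has_sum (M * (1/(1-\<bar>X\<bar>/r) * (1/(1-\<bar>Y\<bar>/r))))) UNIV"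
    using has_sum_cmult_right[OF geo2_has_sum[of "\<bar>X\<bar>/r" "\<bar>Y\<bar>/r"], of M] assms
    by (simp add: case_prod_unfold)
  have eq: "(\<lambda>k. norm ((\<lambda>(m,n). M * ((\<bar>X\<bar>/r)^m * (\<bar>Y\<bar>/r)^n)) k)) = (\<lambda>(m,n). M * ((\<bar>X\<bar>/r)^m * (\<bar>Y\<bar>/r)^n))"
    using M assms(2) by (auto simp: fun_eq_iff abs_mult power_abs)
  have gs: "(\<lambda>k. norm ((\<lambda>(m,n). M * ((\<bar>X\<bar>/r)^m * (\<bar>Y\<bar>/r)^n)) k)) summable_on UNIV"
    unfolding eq using has_sum_imp_summable[OF g] .
  show ?thesis
  proof (rule Infinite_Sum.abs_summable_on_comparison_test[OF gs])
    fix k :: "nat \<times> nat"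
    obtain m n where k: "k = (m,n)" by fastforce
    have "\<bar>c (m,n)\<bar> * (\<bar>X\<bar>^m * \<bar>Y\<bar>^n) \<le> (M / r^(m+n)) * (\<bar>X\<bar>^m * \<bar>Y\<bar>^n)"
      using assms(1) unfolding bnd_def by (intro mult_right_mono) auto
    also have "\<dots> = M * ((\<bar>X\<bar>/r)^m * (\<bar>Y\<bar>/r)^n)"
      by (simp add: power_divide power_add)
    finally show "norm ((\<lambda>(m,n). c (m,n) * X^m * Y^n) k) \<le> norm ((\<lambda>(m,n). M * ((\<bar>X\<bar>/r)^m * (\<bar>Y\<bar>/r)^n)) k)"
      using M assms by (simp add: k abs_mult power_abs mult.assoc)
  qed
qed

lemma bnd_summable:
  assumes "bnd c r M" "0 < r" "\<bar>X\<bar> < r" "\<bar>Y\<bar> < r"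
  shows "(\<lambda>(m,n). c (m,n) * X^m * Y^n) summable_on UNIV"
  and "\<And>m. (\<lambda>n. c (m,n) * X^m * Y^n) summable_on UNIV"
proof -
  show s: "(\<lambda>(m,n). c (m,n) * X^m * Y^n) summable_on UNIV"
    using abs_summable_summable[OF bnd_abs_summable[OF assms]] .
  fix m
  have "(\<lambda>(m,n). c (m,n) * X^m * Y^n) summable_on Sigma UNIV (\<lambda>_. UNIV)" using s by simp
  from summable_on_SigmaD1[where f="\<lambda>m n. c (m,n) * X^m * Y^n", OF this]
  show "(\<lambda>n. c (m,n) * X^m * Y^n) summable_on UNIV" by simp
qed


definition lps :: "(real \<times> real \<Rightarrow> real) \<Rightarrow> real \<Rightarrow> real \<Rightarrow> real \<Rightarrow> real \<Rightarrow> (nat \<times> nat \<Rightarrow> real) \<Rightarrow> bool" where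
  "lps f a b r M c \<longleftrightarrow> 0 < r \<and> bnd c r M \<and>
     (\<forall>x y. \<bar>x-a\<bar> < r \<longrightarrow> \<bar>y-b\<bar> < r \<longrightarrow> ((\<lambda>(m,n). c (m,n) * (x-a)^m * (y-b)^n) has_sum f (x,y)) UNIV)"

lemma bnd_summable_row:
  assumes "bnd c r M" "0 < r" "\<bar>Y\<bar> < r"
  shows "(\<lambda>n. c (m,n) * Y^n) summable_on UNIV"
proof -
  have "(\<lambda>n. c (m,n) * (r/2)^m * Y^n) summable_on UNIV"
    using bnd_summable(2)[OF assms(1,2) _ assms(3), of "r/2"] assms(2) by auto
  from summable_on_cmult_right[OF this, of "1/(r/2)^m"]
  show ?thesis using assms(2) by (simp add: field_simps)
qed

lemma lps_dx_deriv:
  assumes L: "lps f a b r M c" and x: "\<bar>x-a\<bar> < r" and y: "\<bar>y-b\<bar> < r"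
  shows "((\<lambda>t. f (t,y)) has_real_derivative
           (\<Sum>m. diffs (\<lambda>m. infsum (\<lambda>n. c (m,n) * (y-b)^n) UNIV) m * (x-a)^m)) (at x)"
proof -
  define d where "d m = infsum (\<lambda>n. c (m,n) * (y-b)^n) UNIV" for m
  have r: "0 < r" and B: "bnd c r M" using L unfolding lps_def by auto
  have hs: "((\<lambda>m. d m * (z-a)^m) has_sum f (z,y)) UNIV" if z: "\<bar>z-a\<bar> < r" for z
  proof -
    have H: "((\<lambda>(m,n). c (m,n) * (z-a)^m * (y-b)^n) has_sum f (z,y)) (Sigma UNIV (\<lambda>_. UNIV))"
      using L z y unfolding lps_def by simp
    have inner: "((\<lambda>n. c (m,n) * (z-a)^m * (y-b)^n) has_sum d m * (z-a)^m) UNIV" for m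
    proof -
      have "((\<lambda>n. c (m,n) * (y-b)^n) has_sum d m) UNIV"
        unfolding d_def using bnd_summable_row[OF B r y] by simp
      from has_sum_cmult_left[OF this, of "(z-a)^m"]
      show ?thesis by (simp add: ac_simps)
    qed
    show ?thesis
      by (rule has_sum_SigmaD[OF H]) (use inner in simp)
  qed
  have fz: "f (z,y) = (\<Sum>m. d m * (z-a)^m)" if "\<bar>z-a\<bar> < r" for z
    using sums_unique[OF has_sum_imp_sums[OF hs[OF that]]] by simp
  define K where "K = (\<bar>x-a\<bar> + r) / 2"
  have K: "\<bar>K\<bar> < r" "\<bar>x-a\<bar> < \<bar>K\<bar>" using x unfolding K_def by auto
  have "summable (\<lambda>m. d m * ((a+K)-a)^m)"
    using sums_summable[OF has_sum_imp_sums[OF hs[of "a+K"]]] K by simp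
  then have sK: "summable (\<lambda>m. d m * K^m)" by simp
  have D1: "DERIV (\<lambda>z. \<Sum>m. d m * z^m) (x-a) :> (\<Sum>m. diffs d m * (x-a)^m)"
    by (rule termdiffs_strong[OF sK]) (use K in simp)
  have D2: "DERIV (\<lambda>t. \<Sum>m. d m * (t-a)^m) x :> (\<Sum>m. diffs d m * (x-a)^m)"
  proof -
    have dg: "((\<lambda>t. t - a) has_real_derivative 1) (at x)" by (auto intro!: derivative_eq_intros)
    show ?thesis using DERIV_chain2[where f="\<lambda>z. \<Sum>m. d m * z^m" and g="\<lambda>t. t - a" and x=x, OF _ dg] D1 by simp
  qed
  have "DERIV (\<lambda>t. f (t,y)) x :> (\<Sum>m. diffs d m * (x-a)^m)"
    by (rule has_field_derivative_transform_within_open[OF D2, of "ball a r"])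
       (use x fz in \<open>auto simp: dist_real_def abs_minus_commute\<close>)
  then show ?thesis unfolding d_def .
qed

lemma lps_has_pdx:
  assumes L: "lps f a b r M c" and x: "\<bar>x-a\<bar> < r" and y: "\<bar>y-b\<bar> < r"
  shows "((\<lambda>t. f (t,y)) has_real_derivative pdx f (x,y)) (at x)"
  using lps_dx_deriv[OF assms] DERIV_imp_deriv[OF lps_dx_deriv[OF assms]]
  by (simp add: pdx_def)

lemma suc_le_pow2: "real (Suc m) \<le> 2^(m+n)"
proof -
  have "Suc m \<le> 2^m" using less_exp[of m] by (simp add: Suc_le_eq)
  also have "(2::nat)^m \<le> 2^(m+n)" by (rule power_increasing) auto
  finally have "Suc m \<le> (2::nat)^(m+n)" .
  then show ?thesis by (metis of_nat_le_iff of_nat_numeral of_nat_power)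
qed

lemma lps_dx:
  assumes L: "lps f a b r M c"
  shows "lps (pdx f) a b (r/2) (M/r) (\<lambda>(m,n). real (Suc m) * c (Suc m, n))"
proof -
  have r: "0 < r" and B: "bnd c r M" using L unfolding lps_def by auto
  have M: "0 \<le> M" using B r unfolding bnd_def
    by (metis abs_ge_zero order_trans zero_le_divide_iff zero_less_power not_le)
  have B': "bnd (\<lambda>(m,n). real (Suc m) * c (Suc m, n)) (r/2) (M/r)"
    unfolding bnd_def
  proof (intro allI)
    fix m n
    have "\<bar>real (Suc m) * c (Suc m, n)\<bar> = real (Suc m) * \<bar>c (Suc m, n)\<bar>" by (simp add: abs_mult)
    also have "\<dots> \<le> real (Suc m) * (M / r^(Suc m + n))"
    proof -
      have "\<bar>c (Suc m, n)\<bar> \<le> M / r^(Suc m + n)" using B unfolding bnd_def by blast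
      then show ?thesis by (intro mult_left_mono) auto
    qed
    also have "\<dots> \<le> 2^(m+n) * (M / r^(Suc m + n))"
      using suc_le_pow2[of m n] M r by (intro mult_right_mono) auto
    also have "\<dots> = (M/r) / (r/2)^(m+n)"
      using r by (simp add: power_divide field_simps)
    finally show "\<bar>(\<lambda>(m,n). real (Suc m) * c (Suc m, n)) (m,n)\<bar> \<le> (M/r) / (r/2)^(m+n)" by simp
  qed
  have S: "((\<lambda>(m,n). real (Suc m) * c (Suc m, n) * (x-a)^m * (y-b)^n) has_sum pdx f (x,y)) UNIV"
    if x: "\<bar>x-a\<bar> < r/2" and y: "\<bar>y-b\<bar> < r/2" for x y
  proof -
    define d where "d m = infsum (\<lambda>n. c (m,n) * (y-b)^n) UNIV" for m
    have x': "\<bar>x-a\<bar> < r" and y': "\<bar>y-b\<bar> < r" using x y abs_ge_zero[of "x-a"] abs_ge_zero[of "y-b"] by linarith+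
    have pd: "pdx f (x,y) = (\<Sum>m. diffs d m * (x-a)^m)"
      using DERIV_imp_deriv[OF lps_dx_deriv[OF L x' y']] unfolding d_def pdx_def by simp
    have sm: "(\<lambda>(m,n). real (Suc m) * c (Suc m, n) * (x-a)^m * (y-b)^n) summable_on UNIV"
      using bnd_summable(1)[OF B' _ x y] r by simp
    then obtain S' where S': "((\<lambda>(m,n). real (Suc m) * c (Suc m, n) * (x-a)^m * (y-b)^n) has_sum S') (Sigma UNIV (\<lambda>_. UNIV))"
      unfolding summable_on_def by auto
    have inner: "((\<lambda>n. real (Suc m) * c (Suc m, n) * (x-a)^m * (y-b)^n) has_sum (diffs d m * (x-a)^m)) UNIV" for m
    proof -
      have "((\<lambda>n. c (Suc m,n) * (y-b)^n) has_sum d (Suc m)) UNIV"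
        unfolding d_def using bnd_summable_row[OF B r y'] by simp
      from has_sum_cmult_right[OF this, of "real (Suc m) * (x-a)^m"]
      show ?thesis by (simp add: diffs_def ac_simps)
    qed
    have "((\<lambda>m. diffs d m * (x-a)^m) has_sum S') UNIV"
      by (rule has_sum_SigmaD[OF S']) (use inner in simp)
    then have "S' = pdx f (x,y)"
      using sums_unique[OF has_sum_imp_sums] pd by metis
    then show ?thesis using S' by simp
  qed
  show ?thesis unfolding lps_def using r B' S by auto
qed

definition swapf :: "(real \<times> real \<Rightarrow> real) \<Rightarrow> real \<times> real \<Rightarrow> real" where
  "swapf f = (\<lambda>(x,y). f (y,x))"

lemma swapf_swapf[simp]: "swapf (swapf f) = f"
  by (auto simp: swapf_def fun_eq_iff)

lemma pdy_swapf: "pdy f = swapf (pdx (swapf f))"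
  by (auto simp: swapf_def pdx_def pdy_def fun_eq_iff)

lemma lps_swap:
  assumes L: "lps f a b r M c"
  shows "lps (swapf f) b a r M (\<lambda>(m,n). c (n,m))"
proof -
  have r: "0 < r" and B: "bnd c r M" using L unfolding lps_def by auto
  have B': "bnd (\<lambda>(m,n). c (n,m)) r M" unfolding bnd_def
  proof (intro allI)
    fix m n
    have "\<bar>c (n,m)\<bar> \<le> M / r^(n+m)" using B unfolding bnd_def by blast
    then show "\<bar>(\<lambda>(m,n). c (n,m)) (m,n)\<bar> \<le> M / r^(m+n)" by (simp add: add.commute)
  qed
  have S: "((\<lambda>(m,n). c (n,m) * (x-b)^m * (y-a)^n) has_sum swapf f (x,y)) UNIV"
    if "\<bar>x-b\<bar> < r" "\<bar>y-a\<bar> < r" for x y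
  proof -
    have "((\<lambda>(m,n). c (m,n) * (y-a)^m * (x-b)^n) has_sum f (y,x)) (UNIV \<times> UNIV)"
      using L that unfolding lps_def by simp
    then have "((\<lambda>(m,n). (\<lambda>(m,n). c (m,n) * (y-a)^m * (x-b)^n) (n,m)) has_sum f (y,x)) (UNIV \<times> UNIV)"
      using has_sum_swap by blast
    then show ?thesis by (simp add: swapf_def ac_simps)
  qed
  show ?thesis unfolding lps_def using r B' S by auto
qed

lemma lps_dy:
  assumes L: "lps f a b r M c"
  shows "lps (pdy f) a b (r/2) (M/r) (\<lambda>(m,n). real (Suc n) * c (m, Suc n))"
proof -
  have "lps (swapf (pdx (swapf f))) a b (r/2) (M/r) (\<lambda>(m,n). (\<lambda>(m,n). real (Suc m) * (\<lambda>(m,n). c (n,m)) (Suc m, n)) (n,m))"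
    by (rule lps_swap[OF lps_dx[OF lps_swap[OF L]]])
  then show ?thesis by (simp add: pdy_swapf[symmetric])
qed

lemma lps_has_pdy:
  assumes L: "lps f a b r M c" and x: "\<bar>x-a\<bar> < r" and y: "\<bar>y-b\<bar> < r"
  shows "((\<lambda>t. f (x,t)) has_real_derivative pdy f (x,y)) (at y)"
  using lps_has_pdx[OF lps_swap[OF L] y x]
  by (simp add: pdy_swapf swapf_def)

lemma lps_center:
  assumes L: "lps f a b r M c"
  shows "f (a,b) = c (0,0)"
proof -
  have r: "0 < r" using L unfolding lps_def by auto
  have H0: "\<forall>x y. \<bar>x-a\<bar> < r \<longrightarrow> \<bar>y-b\<bar> < r \<longrightarrow> ((\<lambda>(m,n). c (m,n) * (x-a)^m * (y-b)^n) has_sum f (x,y)) UNIV"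
    using L unfolding lps_def by auto
  have H: "((\<lambda>(m,n). c (m,n) * (a-a)^m * (b-b)^n) has_sum f (a,b)) UNIV"
    using spec[OF spec[OF H0, of a], of b] r by simp
  have "((\<lambda>(m,n). c (m,n) * (a-a)^m * (b-b)^n) has_sum c (0,0)) UNIV"
  proof -
    have "((\<lambda>(m,n). c (m,n) * (a-a)^m * (b-b)^n) has_sum c (0,0)) {(0,0)}"
      using has_sum_finite[of "{(0::nat,0::nat)}" "\<lambda>(m,n). c (m,n) * (a-a)^m * (b-b)^n"] by simp
    then show ?thesis
      by (rule has_sum_cong_neutral[THEN iffD1, rotated -1]) (auto simp: zero_power)
  qed
  then show ?thesis using H has_sum_unique by blast
qed


definition Sm :: "(real \<times> real \<Rightarrow> real) \<Rightarrow> bool" where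
  "Sm f \<longleftrightarrow> (\<forall>a b. \<exists>r M c. lps f a b r M c)"

lemma Sm_dx: "Sm f \<Longrightarrow> Sm (pdx f)"
  unfolding Sm_def by (meson lps_dx)

lemma Sm_dy: "Sm f \<Longrightarrow> Sm (pdy f)"
  unfolding Sm_def by (meson lps_dy)

lemma lps_r: "lps f a b r M c \<Longrightarrow> 0 < r"
  unfolding lps_def by auto

lemma Sm_hasx: "Sm f \<Longrightarrow> ((\<lambda>t. f (t,y)) has_real_derivative pdx f (x,y)) (at x)"
  unfolding Sm_def by (metis lps_has_pdx lps_r diff_self abs_zero)

lemma Sm_hasy: "Sm f \<Longrightarrow> ((\<lambda>t. f (x,t)) has_real_derivative pdy f (x,y)) (at y)"
  unfolding Sm_def by (metis lps_has_pdy lps_r diff_self abs_zero)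

lemma Sm_sym: "Sm f \<Longrightarrow> pdy (pdx f) = pdx (pdy f)"
proof (rule ext)
  fix z assume S: "Sm f"
  obtain a b :: real where z: "z = (a,b)" by fastforce
  obtain r M c where L: "lps f a b r M c" using S unfolding Sm_def by blast
  show "pdy (pdx f) z = pdx (pdy f) z"
    using lps_center[OF lps_dy[OF lps_dx[OF L]]] lps_center[OF lps_dx[OF lps_dy[OF L]]] z by simp
qed

lemma lps_bound_diff:
  assumes L: "lps f a b r M c" and d: "0 < d" "d \<le> r/2" and x: "\<bar>x-a\<bar> \<le> d" and y: "\<bar>y-b\<bar> \<le> d"
  shows "\<bar>f (x,y) - f (a,b)\<bar> \<le> 8 * M * d / r"
proof -
  have r: "0 < r" and B: "bnd c r M" using L unfolding lps_def by auto
  have M: "0 \<le> M" using B r unfolding bnd_def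
    by (metis abs_ge_zero order_trans zero_le_divide_iff zero_less_power not_le)
  have x': "\<bar>x-a\<bar> < r" and y': "\<bar>y-b\<bar> < r" using x y d by linarith+
  have H: "((\<lambda>(m,n). c (m,n) * (x-a)^m * (y-b)^n) has_sum f (x,y)) UNIV"
    using L x' y' unfolding lps_def by auto
  have H0: "((\<lambda>k. if k = (0::nat,0::nat) then c (0,0) else 0) has_sum c (0,0)) UNIV"
  proof -
    have "((\<lambda>k. if k = (0::nat,0::nat) then c (0,0) else 0) has_sum c (0,0)) {(0,0)}"
      using has_sum_finite[of "{(0::nat,0::nat)}" "\<lambda>k. if k = (0::nat,0::nat) then c (0,0) else 0"] by simp
    moreover have "((\<lambda>k. if k = (0::nat,0::nat) then c (0,0) else 0) has_sum c (0,0)) UNIV \<longleftrightarrow>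
        ((\<lambda>k. if k = (0::nat,0::nat) then c (0,0) else 0) has_sum c (0,0)) {(0,0)}"
      by (rule has_sum_cong_neutral) auto
    ultimately show ?thesis by simp
  qed
  have HD: "((\<lambda>k. (\<lambda>(m,n). c (m,n) * (x-a)^m * (y-b)^n) k + - (if k = (0::nat,0::nat) then c (0,0) else 0))
      has_sum (f (x,y) + - c (0,0))) UNIV"
    by (rule has_sum_add[OF H has_sum_uminusI[OF H0]])
  define t where "t = 2*d/r"
  have t: "0 \<le> t" "t \<le> 1" using d r unfolding t_def by (auto simp: field_simps)
  have G: "((\<lambda>(m,n). M * t * ((1/2)^m * (1/2)^n)) has_sum (M * t * (1/(1-1/2) * (1/(1-1/2))))) UNIV"
    using has_sum_cmult_right[OF geo2_has_sum[of "1/2" "1/2"], of "M*t"] by (simp add: case_prod_unfold)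
  have le: "norm ((\<lambda>(m,n). c (m,n) * (x-a)^m * (y-b)^n) k + - (if k = (0::nat,0::nat) then c (0,0) else 0))
      \<le> (\<lambda>(m,n). M * t * ((1/2)^m * (1/2)^n)) k" for k
  proof -
    obtain m n where k: "k = (m,n)" by fastforce
    show ?thesis
    proof (cases "k = (0,0)")
      case True then show ?thesis using M t by (simp add: k)
    next
      case False
      then have mn: "1 \<le> m + n" using k by auto
      have "\<bar>c (m,n) * (x-a)^m * (y-b)^n\<bar> = \<bar>c (m,n)\<bar> * (\<bar>x-a\<bar>^m * \<bar>y-b\<bar>^n)"
        by (simp add: abs_mult power_abs)
      also have "\<dots> \<le> (M / r^(m+n)) * (d^m * d^n)"
        using B x y unfolding bnd_def
        by (intro mult_mono mult_mono' power_mono) (auto intro: mult_nonneg_nonneg)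
      also have "\<dots> = M * (t/2)^(m+n)"
        unfolding t_def using r by (simp add: power_add power_divide field_simps)
      also have "\<dots> = M * (t^(m+n) * (1/2)^(m+n))" by (simp add: power_mult_distrib power_divide)
      also have "\<dots> \<le> M * (t * (1/2)^(m+n))"
      proof -
        have "t^(m+n) \<le> t^1" by (rule power_decreasing) (use t mn in auto)
        then show ?thesis using M by (intro mult_left_mono) auto
      qed
      finally show ?thesis using False M t by (simp add: k power_add ac_simps)
    qed
  qed
  have "norm (f (x,y) + - c (0,0)) \<le> M * t * (1/(1-1/2) * (1/(1-1/2)))"
    by (rule norm_infsum_le[OF HD G le])
  moreover have "f (a,b) = c (0,0)" by (rule lps_center[OF L])
  ultimately show ?thesis unfolding t_def by (simp add: field_simps)
qed

lemma lps_isCont: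
  assumes L: "lps f a b r M c"
  shows "isCont f (a,b)"
  unfolding continuous_at_eps_delta
proof (intro allI impI)
  fix e :: real assume e: "0 < e"
  have r: "0 < r" and B: "bnd c r M" using L unfolding lps_def by auto
  have M: "0 \<le> M" using B r unfolding bnd_def
    by (metis abs_ge_zero order_trans zero_le_divide_iff zero_less_power not_le)
  define d where "d = min (r/2) (e * r / (16 * (M + 1)))"
  have "0 < e * r / (16 * (M + 1))" using e r M by (intro divide_pos_pos mult_pos_pos) auto
  have d2: "d \<le> r/2" unfolding d_def by (rule min.cobounded1)
  have d3: "d \<le> e * r / (16 * (M + 1))" unfolding d_def by (rule min.cobounded2)
  have d1: "0 < d" unfolding d_def using r \<open>0 < e * r / (16 * (M + 1))\<close> by simp
  note d = d1 d2 d3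
  have Mp: "0 < 16 * (M + 1)" using M by simp
  have A: "d * (16 * (M + 1)) \<le> e * r" using d(3) Mp by (simp add: pos_le_divide_eq)
  have "8 * M * d \<le> 8 * (M + 1) * d" using d(1) by simp
  then have "8 * M * d < e * r" using A e r d(1)
    by (smt (verit, best) mult_pos_pos ring_class.ring_distribs(1) mult.commute mult.left_commute)
  then have de: "8 * M * d / r < e" using r by (simp add: divide_less_eq)
  show "\<exists>d>0. \<forall>z. dist z (a,b) < d \<longrightarrow> dist (f z) (f (a,b)) < e"
  proof (intro exI[of _ d] conjI allI impI)
    show "0 < d" by (rule d)
    fix z assume z: "dist z (a,b) < d"
    obtain x y where zz: "z = (x,y)" by fastforce
    have "dist x a < d" "dist y b < d" using dist_fst_le[of z "(a,b)"] dist_snd_le[of z "(a,b)"] z zz by auto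
    then have "\<bar>x-a\<bar> \<le> d" "\<bar>y-b\<bar> \<le> d" by (auto simp: dist_real_def)
    from lps_bound_diff[OF L d(1,2) this] de
    show "dist (f z) (f (a,b)) < e" by (simp add: zz dist_real_def)
  qed
qed

lemma Sm_cont: "Sm f \<Longrightarrow> isCont f z"
  unfolding Sm_def by (metis lps_isCont surj_pair)

lemma analytic_Sm:
  assumes "real_analytic2 f"
  shows "Sm f"
  unfolding Sm_def
proof (intro allI)
  fix a b
  obtain r c where r: "0 < r" and H: "\<And>x y. dist (x,y) (a,b) < r \<Longrightarrow>
      ((\<lambda>(m,n). c (m,n) * (x-a)^m * (y-b)^n) has_sum f (x,y)) UNIV"
    using assms unfolding real_analytic2_def by blast
  define \<rho> where "\<rho> = r/2"
  have \<rho>: "0 < \<rho>" using r unfolding \<rho>_def by auto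
  have inr: "dist (x,y) (a,b) < r" if "\<bar>x-a\<bar> \<le> \<rho>" "\<bar>y-b\<bar> \<le> \<rho>" for x y
  proof -
    have "\<bar>x-a\<bar>^2 \<le> \<rho>^2" "\<bar>y-b\<bar>^2 \<le> \<rho>^2"
      using power_mono[OF that(1), of 2] power_mono[OF that(2), of 2] by auto
    then have "(x-a)^2 \<le> \<rho>^2" "(y-b)^2 \<le> \<rho>^2" by simp_all
    then have "(x-a)^2 + (y-b)^2 \<le> r^2/2" unfolding \<rho>_def by (simp add: power_divide)
    moreover have "0 < r^2" using r by simp
    ultimately have "(x-a)^2 + (y-b)^2 < r^2" by linarith
    then have "(dist x a)^2 + (dist y b)^2 < r^2"
      unfolding dist_real_def by simp
    then have "sqrt ((dist x a)^2 + (dist y b)^2) < sqrt (r^2)" by (rule real_sqrt_less_mono)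
    then show ?thesis using r by (simp add: dist_Pair_Pair)
  qed
  have Hp: "((\<lambda>(m,n). c (m,n) * (a+\<rho>-a)^m * (b+\<rho>-b)^n) has_sum f (a+\<rho>,b+\<rho>)) UNIV"
    by (rule H[OF inr]) (use \<rho> in auto)
  then have "(\<lambda>(m,n). c (m,n) * \<rho>^m * \<rho>^n) summable_on UNIV"
    using has_sum_imp_summable by fastforce
  then have AS: "(\<lambda>k. norm ((\<lambda>(m,n). c (m,n) * \<rho>^m * \<rho>^n) k)) summable_on UNIV"
    using summable_on_iff_abs_summable_on_real by blast
  define M where "M = infsum (\<lambda>k. norm ((\<lambda>(m,n). c (m,n) * \<rho>^m * \<rho>^n) k)) UNIV"
  have bnd: "bnd c \<rho> M" unfolding bnd_def
  proof (intro allI)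
    fix m n
    have "norm ((\<lambda>(m,n). c (m,n) * \<rho>^m * \<rho>^n) (m,n)) \<le> M"
    proof -
      have "((\<lambda>k. norm ((\<lambda>(m,n). c (m,n) * \<rho>^m * \<rho>^n) k)) has_sum
             norm ((\<lambda>(m,n). c (m,n) * \<rho>^m * \<rho>^n) (m,n))) {(m,n)}"
        using has_sum_finite[of "{(m,n)}" "\<lambda>k. norm ((\<lambda>(m,n). c (m,n) * \<rho>^m * \<rho>^n) k)"] by simp
      then show ?thesis unfolding M_def
        by (rule has_sum_mono_neutral[OF _ has_sum_infsum[OF AS]]) auto
    qed
    then have "\<bar>c (m,n)\<bar> * \<rho>^(m+n) \<le> M" using \<rho> by (simp add: abs_mult power_add)
    then show "\<bar>c (m,n)\<bar> \<le> M / \<rho>^(m+n)" using \<rho> by (simp add: field_simps)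
  qed
  have "lps f a b \<rho> M c" unfolding lps_def
    using \<rho> bnd H inr by auto
  then show "\<exists>r M c. lps f a b r M c" by blast
qed

lemma lps_neg: "lps f a b r M c \<Longrightarrow> lps (\<lambda>z. - f z) a b r M (\<lambda>k. - c k)"
  unfolding lps_def bnd_def
proof (elim conjE, intro conjI allI impI)
  fix x y assume "\<forall>x y. \<bar>x - a\<bar> < r \<longrightarrow> \<bar>y - b\<bar> < r \<longrightarrow> ((\<lambda>(m, n). c (m, n) * (x - a) ^ m * (y - b) ^ n) has_sum f (x, y)) UNIV"
    "\<bar>x - a\<bar> < r" "\<bar>y - b\<bar> < r"
  then have "((\<lambda>(m, n). c (m, n) * (x - a) ^ m * (y - b) ^ n) has_sum f (x, y)) UNIV" by blast
  from has_sum_uminusI[OF this]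
  show "((\<lambda>(m, n). - c (m, n) * (x - a) ^ m * (y - b) ^ n) has_sum - f (x, y)) UNIV"
    by (simp add: case_prod_unfold)
qed auto

lemma Sm_neg: "Sm f \<Longrightarrow> Sm (\<lambda>z. - f z)"
  unfolding Sm_def using lps_neg by blast

lemma Sm_neg_pdx: "Sm f \<Longrightarrow> pdx (\<lambda>z. - f z) = (\<lambda>z. - pdx f z)"
proof (rule ext)
  fix z :: "real \<times> real" assume S: "Sm f"
  obtain x y where z: "z = (x,y)" by fastforce
  have "((\<lambda>t. - f (t,y)) has_real_derivative - pdx f (x,y)) (at x)"
    using Sm_hasx[OF S] by (rule DERIV_minus)
  then show "pdx (\<lambda>z. - f z) z = - pdx f z"
    unfolding z pdx_def using DERIV_imp_deriv by fastforce
qed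

lemma Sm_neg_pdy: "Sm f \<Longrightarrow> pdy (\<lambda>z. - f z) = (\<lambda>z. - pdy f z)"
proof (rule ext)
  fix z :: "real \<times> real" assume S: "Sm f"
  obtain x y where z: "z = (x,y)" by fastforce
  have "((\<lambda>t. - f (x,t)) has_real_derivative - pdy f (x,y)) (at y)"
    using Sm_hasy[OF S] by (rule DERIV_minus)
  then show "pdy (\<lambda>z. - f z) z = - pdy f z"
    unfolding z pdy_def using DERIV_imp_deriv by fastforce
qed


lemma Sm_isCont_y: "Sm u \<Longrightarrow> isCont (\<lambda>y. u (x,y)) y"
  using Sm_hasy DERIV_isCont by blast

lemma Sm_isCont_x: "Sm u \<Longrightarrow> isCont (\<lambda>x. u (x,y)) x"
  using Sm_hasx DERIV_isCont by blast

locale box =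
  fixes u :: "real \<times> real \<Rightarrow> real" and x0 y0 \<delta> \<epsilon> \<eta> :: real
  assumes Su: "Sm u" and dpos: "0 < \<delta>" and epos: "0 < \<epsilon>" and hpos: "0 < \<eta>"
  and qpos: "\<And>x y. \<bar>x-x0\<bar> \<le> \<delta> \<Longrightarrow> \<bar>y-y0\<bar> \<le> \<epsilon> \<Longrightarrow> pdy u (x,y) > 0"
  and lo: "\<And>x. \<bar>x-x0\<bar> \<le> \<delta> \<Longrightarrow> u (x, y0-\<epsilon>) < u (x0,y0) - \<eta>"
  and hi: "\<And>x. \<bar>x-x0\<bar> \<le> \<delta> \<Longrightarrow> u (x, y0+\<epsilon>) > u (x0,y0) + \<eta>"
begin

definition S where "S = {z. \<bar>fst z - x0\<bar> < \<delta> \<and> \<bar>snd z - y0\<bar> < \<epsilon> \<and> \<bar>u z - u (x0,y0)\<bar> < \<eta>}"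

lemma ucont: "continuous_on UNIV u"
  using Sm_cont[OF Su] by (simp add: continuous_at_imp_continuous_on)

lemma S_open: "open S"
  unfolding S_def
  by (intro open_Collect_conj open_Collect_less continuous_intros ucont)

lemma z0S: "(x0,y0) \<in> S"
  using dpos epos hpos by (simp add: S_def)

lemma S_box: "z \<in> S \<Longrightarrow> \<bar>fst z - x0\<bar> < \<delta> \<and> \<bar>snd z - y0\<bar> < \<epsilon> \<and> \<bar>u z - u (x0,y0)\<bar> < \<eta>"
  by (simp add: S_def)

lemma S_q: "z \<in> S \<Longrightarrow> pdy u z > 0"
  using S_box[of z] qpos[of "fst z" "snd z"] by auto

lemma mono:
  assumes "\<bar>x-x0\<bar> \<le> \<delta>" "y0-\<epsilon> \<le> y1" "y1 < y2" "y2 \<le> y0+\<epsilon>"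
  shows "u (x,y1) < u (x,y2)"
proof -
  have "(\<lambda>y. u (x,y)) y1 < (\<lambda>y. u (x,y)) y2"
  proof (rule DERIV_pos_imp_increasing[OF assms(3)])
    fix y assume "y1 \<le> y" "y \<le> y2"
    then show "\<exists>D. DERIV (\<lambda>y. u (x,y)) y :> D \<and> D > 0"
      using Sm_hasy[OF Su] qpos[of x y] assms by (intro exI[of _ "pdy u (x,y)"]) auto
  qed
  then show ?thesis by simp
qed

lemma mono_inj:
  assumes "\<bar>x-x0\<bar> \<le> \<delta>" "y0-\<epsilon> \<le> y1" "y1 \<le> y0+\<epsilon>" "y0-\<epsilon> \<le> y2" "y2 \<le> y0+\<epsilon>"
    and "u (x,y1) = u (x,y2)"
  shows "y1 = y2"
  using mono[of x y1 y2] mono[of x y2 y1] assms by (cases y1 y2 rule: linorder_cases) auto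

lemma exists_y:
  assumes x: "\<bar>x-x0\<bar> \<le> \<delta>" and s: "\<bar>s - u (x0,y0)\<bar> < \<eta>"
  shows "\<exists>y. y0-\<epsilon> < y \<and> y < y0+\<epsilon> \<and> u (x,y) = s"
proof -
  have c: "continuous_on {y0-\<epsilon>..y0+\<epsilon>} (\<lambda>y. u (x,y))"
    using Sm_isCont_y[OF Su] by (simp add: continuous_at_imp_continuous_on)
  have b: "u (x,y0-\<epsilon>) \<le> s" "s \<le> u (x,y0+\<epsilon>)" "y0-\<epsilon> \<le> y0+\<epsilon>"
    using lo[OF x] hi[OF x] s epos by (auto simp: abs_less_iff)
  obtain y where y: "y0-\<epsilon> \<le> y" "y \<le> y0+\<epsilon>" "u (x,y) = s"
    using IVT'[of "\<lambda>y. u (x,y)" "y0-\<epsilon>" s "y0+\<epsilon>", OF b c] by auto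
  have "y \<noteq> y0-\<epsilon>" "y \<noteq> y0+\<epsilon>" using y lo[OF x] hi[OF x] s by auto
  then show ?thesis using y by (intro exI[of _ y]) auto
qed

lemma conn:
  assumes z1: "z1 \<in> S" and z2: "z2 \<in> S" and eq: "u z1 = u z2"
  shows "connected_component {z. u z = u z1} z1 z2"
proof -
  define t where "t = u z1"
  define K where "K = {x0-\<delta>..x0+\<delta>} \<times> {y0-\<epsilon>..y0+\<epsilon>}"
  define \<Phi> where "\<Phi> = (\<lambda>z. (fst z, u z))"
  have Kc: "compact K" unfolding K_def by (intro compact_Times compact_Icc)
  have \<Phi>c: "continuous_on K \<Phi>" unfolding \<Phi>_def
    by (intro continuous_intros continuous_on_subset[OF ucont]) auto
  have \<Phi>i: "inj_on \<Phi> K"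
  proof (rule inj_onI)
    fix a b assume "a \<in> K" "b \<in> K" "\<Phi> a = \<Phi> b"
    then show "a = b" unfolding K_def \<Phi>_def
      using mono_inj[of "fst a" "snd a" "snd b"] by (auto simp: prod_eq_iff abs_le_iff)
  qed
  obtain g where hom: "homeomorphism K (\<Phi> ` K) \<Phi> g"
    using homeomorphism_compact[OF Kc \<Phi>c refl \<Phi>i] by blast
  have gc: "continuous_on (\<Phi> ` K) g" and gK: "\<And>k. k \<in> K \<Longrightarrow> g (\<Phi> k) = k"
    using hom unfolding homeomorphism_def by auto
  define L where "L = (\<lambda>x. (x,t)) ` {x0-\<delta>..x0+\<delta>}"
  have Lc: "connected L" unfolding L_def
    by (intro connected_continuous_image continuous_intros connected_Icc)
  have ts: "\<bar>t - u (x0,y0)\<bar> < \<eta>" using S_box[OF z1] unfolding t_def by auto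
  have LK: "L \<subseteq> \<Phi> ` K"
  proof
    fix w assume "w \<in> L"
    then obtain x where x: "x \<in> {x0-\<delta>..x0+\<delta>}" "w = (x,t)" unfolding L_def by auto
    then have xa: "\<bar>x-x0\<bar> \<le> \<delta>" by auto
    obtain y where y: "y0-\<epsilon> < y" "y < y0+\<epsilon>" "u (x,y) = t" using exists_y[OF xa ts] by blast
    have "(x,y) \<in> K" using x y unfolding K_def by auto
    moreover have "\<Phi> (x,y) = w" using x y unfolding \<Phi>_def by auto
    ultimately show "w \<in> \<Phi> ` K" by blast
  qed
  have C: "connected (g ` L)"
    by (rule connected_continuous_image[OF continuous_on_subset[OF gc LK] Lc])
  have sub: "g ` L \<subseteq> {z. u z = u z1}"
  proof
    fix v assume "v \<in> g ` L"
    then obtain w where w: "w \<in> L" "v = g w" by auto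
    then obtain k where k: "k \<in> K" "w = \<Phi> k" using LK by auto
    have "v = k" using gK[OF k(1)] k w by simp
    moreover have "snd w = t" using w(1) unfolding L_def by auto
    ultimately show "v \<in> {z. u z = u z1}" using k unfolding \<Phi>_def t_def by auto
  qed
  have inL: "z \<in> g ` L" if z: "z \<in> S" "u z = t" for z
  proof -
    have zK: "z \<in> K" using S_box[OF z(1)] unfolding K_def by (auto simp: mem_Times_iff abs_le_iff abs_less_iff)
    have "\<Phi> z \<in> L" using S_box[OF z(1)] z(2) unfolding L_def \<Phi>_def
      by (auto simp: abs_less_iff intro!: image_eqI[of _ _ "fst z"])
    then show ?thesis using gK[OF zK] by (metis image_eqI)
  qed
  show ?thesis
    by (rule connected_componentI[OF C sub inL inL]) (use z1 z2 eq t_def in auto)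
qed

definition Yf where "Yf s = (THE y. y0-\<epsilon> \<le> y \<and> y \<le> y0+\<epsilon> \<and> u (x0,y) = s)"

lemma Y_inv:
  assumes "y0-\<epsilon> \<le> y" "y \<le> y0+\<epsilon>"
  shows "Yf (u (x0,y)) = y"
  unfolding Yf_def
  by (rule the_equality) (use assms mono_inj[of x0] dpos in auto)

lemma Y_prop:
  assumes "\<bar>s - u (x0,y0)\<bar> < \<eta>"
  shows "y0-\<epsilon> < Yf s \<and> Yf s < y0+\<epsilon> \<and> u (x0, Yf s) = s"
proof -
  obtain y where y: "y0-\<epsilon> < y" "y < y0+\<epsilon>" "u (x0,y) = s"
    using exists_y[OF _ assms, of x0] dpos by auto
  then show ?thesis using Y_inv[of y] by auto
qed

definition LC where "LC g \<longleftrightarrow> (\<forall>z1\<in>S. \<forall>z2\<in>S. u z1 = u z2 \<longrightarrow> g z1 = g z2)"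

lemma LC_comb: "LC g \<Longrightarrow> LC h \<Longrightarrow> LC (\<lambda>z. F (g z) (h z))"
  unfolding LC_def by metis

lemma open_slice_x: "open {t. (t,y) \<in> S}"
proof -
  have "open ((\<lambda>t. (t,y)) -` S)"
    by (rule continuous_open_vimage[OF S_open]) (intro continuous_intros)
  then show ?thesis by (simp add: vimage_def)
qed

lemma open_slice_y: "open {t. (x,t) \<in> S}"
proof -
  have "open ((\<lambda>t. (x,t)) -` S)"
    by (rule continuous_open_vimage[OF S_open]) (intro continuous_intros)
  then show ?thesis by (simp add: vimage_def)
qed

lemma LemD:
  assumes LCg: "LC g"
  and gx: "\<And>z. z \<in> S \<Longrightarrow> ((\<lambda>t. g (t, snd z)) has_real_derivative gx z) (at (fst z))"
  and gy: "\<And>z. z \<in> S \<Longrightarrow> ((\<lambda>t. g (fst z, t)) has_real_derivative gy z) (at (snd z))"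
  shows "LC (\<lambda>z. gy z / pdy u z)" and "\<And>z. z \<in> S \<Longrightarrow> gx z = gy z / pdy u z * pdx u z"
proof -
  define u0 where "u0 = u (x0,y0)"
  define G where "G s = g (x0, Yf s)" for s
  define G' where "G' s = gy (x0, Yf s) / pdy u (x0, Yf s)" for s
  have inS: "(x0, Yf s) \<in> S" if "\<bar>s - u0\<bar> < \<eta>" for s
    using Y_prop[of s] that dpos unfolding S_def u0_def by auto
  have gG: "g z = G (u z)" if z: "z \<in> S" for z
  proof -
    have s: "\<bar>u z - u0\<bar> < \<eta>" using S_box[OF z] unfolding u0_def by auto
    have "u (x0, Yf (u z)) = u z" using Y_prop s unfolding u0_def by auto
    then show ?thesis using LCg z inS[OF s] unfolding LC_def G_def by metis
  qed
  have dY: "DERIV Yf s :> inverse (pdy u (x0, Yf s))" if s: "\<bar>s - u0\<bar> < \<eta>" for s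
  proof (rule DERIV_inverse_function[where f="\<lambda>y. u (x0,y)" and a="u0-\<eta>" and b="u0+\<eta>"])
    show "DERIV (\<lambda>y. u (x0, y)) (Yf s) :> pdy u (x0, Yf s)" using Sm_hasy[OF Su] .
    show "pdy u (x0, Yf s) \<noteq> 0" using S_q[OF inS[OF s]] by simp
    show "u0 - \<eta> < s" "s < u0 + \<eta>" using s by auto
    show "\<And>y. u0 - \<eta> < y \<Longrightarrow> y < u0 + \<eta> \<Longrightarrow> u (x0, Yf y) = y"
      using Y_prop unfolding u0_def by auto
    have Ys: "y0-\<epsilon> < Yf s" "Yf s < y0+\<epsilon>" using Y_prop s unfolding u0_def by auto
    have "isCont Yf (u (x0, Yf s))"
      by (rule isCont_inverse_function2[where a="y0-\<epsilon>" and b="y0+\<epsilon>"])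
         (use Ys Y_inv Sm_isCont_y[OF Su] in auto)
    then show "isCont Yf s" using Y_prop s unfolding u0_def by auto
  qed
  have dG: "DERIV G s :> G' s" if s: "\<bar>s - u0\<bar> < \<eta>" for s
  proof -
    have "DERIV (\<lambda>t. g (x0, t)) (Yf s) :> gy (x0, Yf s)" using gy[OF inS[OF s]] by simp
    from DERIV_chain2[OF this dY[OF s]]
    show ?thesis unfolding G_def G'_def by (simp add: divide_inverse)
  qed
  have key: "gx z = G' (u z) * pdx u z \<and> gy z = G' (u z) * pdy u z" if z: "z \<in> S" for z
  proof -
    obtain x y where zz: "z = (x,y)" by fastforce
    have s: "\<bar>u (x,y) - u0\<bar> < \<eta>" using S_box[OF z] zz unfolding u0_def by auto
    have hx: "DERIV (\<lambda>t. G (u (t,y))) x :> G' (u z) * pdx u z"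
      using DERIV_chain2[OF dG[OF s] Sm_hasx[OF Su, of y x]] zz by simp
    have hx': "DERIV (\<lambda>t. g (t,y)) x :> G' (u z) * pdx u z"
      by (rule has_field_derivative_transform_within_open[OF hx open_slice_x])
         (use z zz gG in auto)
    have hy: "DERIV (\<lambda>t. G (u (x,t))) y :> G' (u z) * pdy u z"
      using DERIV_chain2[OF dG[OF s] Sm_hasy[OF Su, of x y]] zz by simp
    have hy': "DERIV (\<lambda>t. g (x,t)) y :> G' (u z) * pdy u z"
      by (rule has_field_derivative_transform_within_open[OF hy open_slice_y])
         (use z zz gG in auto)
    have gx': "DERIV (\<lambda>t. g (t,y)) x :> gx z" using gx[OF z] zz by simp
    have gy': "DERIV (\<lambda>t. g (x,t)) y :> gy z" using gy[OF z] zz by simp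
    show ?thesis using DERIV_unique[OF hx' gx'] DERIV_unique[OF hy' gy'] by simp
  qed
  have ratio: "gy z / pdy u z = G' (u z)" if z: "z \<in> S" for z
    using key[OF z] S_q[OF z] by simp
  show "LC (\<lambda>z. gy z / pdy u z)" unfolding LC_def using ratio by metis
  show "gx z = gy z / pdy u z * pdx u z" if "z \<in> S" for z
    using key[OF that] ratio[OF that] by simp
qed

lemma zero_dx:
  assumes "\<And>z. z \<in> S \<Longrightarrow> F z = 0" "z \<in> S"
    and "((\<lambda>t. F (t, snd z)) has_real_derivative D) (at (fst z))"
  shows "D = 0"
proof -
  obtain x y where zz: "z = (x,y)" by fastforce
  have "((\<lambda>t. F (t, y)) has_real_derivative 0) (at x)"
    by (rule has_field_derivative_transform_within_open[OF DERIV_const open_slice_x])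
       (use assms zz in auto)
  then show ?thesis using DERIV_unique assms(3) zz by auto
qed

lemma zero_dy:
  assumes "\<And>z. z \<in> S \<Longrightarrow> F z = 0" "z \<in> S"
    and "((\<lambda>t. F (fst z, t)) has_real_derivative D) (at (snd z))"
  shows "D = 0"
proof -
  obtain x y where zz: "z = (x,y)" by fastforce
  have "((\<lambda>t. F (x, t)) has_real_derivative 0) (at y)"
    by (rule has_field_derivative_transform_within_open[OF DERIV_const open_slice_y])
       (use assms zz in auto)
  then show ?thesis using DERIV_unique assms(3) zz by auto
qed

end


lemma Sm_dxw: "Sm f \<Longrightarrow> ((\<lambda>t. f (t,y)) has_real_derivative pdx f (x,y)) (at x within A)"
  using Sm_hasx has_field_derivative_at_within by blast

lemma Sm_dyw: "Sm f \<Longrightarrow> ((\<lambda>t. f (x,t)) has_real_derivative pdy f (x,y)) (at y within A)"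
  using Sm_hasy has_field_derivative_at_within by blast

lemma K_alg:
  fixes X e p q r s t rx sx sy ty a1 a2 b1 :: real
  assumes w: "p^2 + q^2 \<noteq> 0"
  and a1: "a1 * q = (2*p* s + 2*q*t)*e - (p^2+q^2)*e"
  and a2: "a2 * q^2 = (2* s* s + 2*p* sy + 2*t*t + 2*q*ty)*e - 2*(2*p* s + 2*q*t)*e + (p^2+q^2)*e - a1 * t"
  and b1: "b1 * q = (sx + ty)*e - (r+t)*e"
  and h1: "(2*p*r + 2*q* s)*e + (p^2+q^2)*(2*X*e) = a1 * p"
  and h2: "(2*r*r + 2*p*rx + 2* s* s + 2*q* sx)*e + 2*(2*p*r + 2*q* s)*(2*X*e) + (p^2+q^2)*(2*e + 4*X*X*e) = a2 * p^2 + a1 * r"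
  and h3: "(rx + sy)*e + (r+t)*(2*X*e) = b1 * p"
  shows "(2*((r+t)*e) - a1)*(a1 - (r+t)*e) + (p^2+q^2)*e*(a2 - 2*b1) = 2*((p^2+q^2)*e)*e"
proof -
  have E1: "(p^2+q^2) * (a2 - 2*b1) = (2*r*r + 2*p*rx + 2* s* s + 2*q* sx)*e + 2*(2*p*r + 2*q* s)*(2*X*e) + (p^2+q^2)*(2*e + 4*X*X*e) - a1 * r
     + (2* s* s + 2*p* sy + 2*t*t + 2*q*ty)*e - 2*(2*p* s + 2*q*t)*e + (p^2+q^2)*e - a1 * t
     - 2 * (p * ((rx + sy)*e + (r+t)*(2*X*e)) + q * ((sx + ty)*e - (r+t)*e))"
    using a2 b1 h2 h3 by algebra
  have E2: "(p^2+q^2) * ((2*((r+t)*e) - a1)*(a1 - (r+t)*e) + (p^2+q^2)*e*(a2 - 2*b1) - 2*((p^2+q^2)*e)*e) = 0"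
    using E1 a1 h1 by algebra
  then show ?thesis using w by (metis mult_eq_0_iff eq_iff_diff_eq_0)
qed

lemma fin_alg:
  fixes X e p q r s t a1 :: real
  assumes q: "q \<noteq> 0" and e: "e \<noteq> 0"
  and h1: "(2*p*r + 2*q* s)*e + (p^2+q^2)*(2*X*e) = a1 * p"
  and a1: "a1 * q = (2*p* s + 2*q*t)*e - (p^2+q^2)*e"
  and hp: "p = -2*X*q" and hr: "r + 2*q + 2*X* s = 0" and hs: "s + 2*X*t = 0"
  shows "X = 0"
proof -
  have "X * q^3 * e = 0" using h1 a1 hp hr hs by algebra
  then show ?thesis using q e by simp
qed

locale eqbox = box +
  assumes LCW: "LC (\<lambda>z. ((pdx u z)^2 + (pdy u z)^2) * exp ((fst z)^2 - snd z))"
  and LCB: "LC (\<lambda>z. (pdx (pdx u) z + pdy (pdy u) z) * exp ((fst z)^2 - snd z))"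
begin

abbreviation "ux \<equiv> pdx u"
abbreviation "uy \<equiv> pdy u"
abbreviation "uxx \<equiv> pdx (pdx u)"
abbreviation "uxy \<equiv> pdy (pdx u)"
abbreviation "uyy \<equiv> pdy (pdy u)"
abbreviation "uxxx \<equiv> pdx (pdx (pdx u))"
abbreviation "uxxy \<equiv> pdx (pdy (pdx u))"
abbreviation "uxyy \<equiv> pdy (pdy (pdx u))"
abbreviation "uyyy \<equiv> pdy (pdy (pdy u))"

lemma Sms: "Sm u" "Sm ux" "Sm uy" "Sm uxx" "Sm uxy" "Sm uyy"
  using Su by (auto intro: Sm_dx Sm_dy)

lemma sym1: "pdx uy = uxy" using Sm_sym[OF Su] by simp
lemma sym2: "pdy uxx = uxxy" using Sm_sym[OF Sm_dx[OF Su]] by simp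
lemma sym3: "pdx uyy = uxyy"
proof -
  have "pdx uyy = pdy (pdx uy)" using Sm_sym[OF Sm_dy[OF Su]] by simp
  then show ?thesis using sym1 by simp
qed

definition EE :: "real \<times> real \<Rightarrow> real" where "EE z = exp ((fst z)^2 - snd z)"
definition "W z = ((ux z)^2 + (uy z)^2) * EE z"
definition "Wx z = (2 * ux z * uxx z + 2 * uy z * uxy z) * EE z + ((ux z)^2 + (uy z)^2) * (2 * fst z * EE z)"
definition "Wy z = (2 * ux z * uxy z + 2 * uy z * uyy z) * EE z - ((ux z)^2 + (uy z)^2) * EE z"
definition "Wxx z = (2 * uxx z * uxx z + 2 * ux z * uxxx z + 2 * uxy z * uxy z + 2 * uy z * uxxy z) * EE z
   + 2 * (2 * ux z * uxx z + 2 * uy z * uxy z) * (2 * fst z * EE z)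
   + ((ux z)^2 + (uy z)^2) * (2 * EE z + 4 * fst z * fst z * EE z)"
definition "Wyx z = (2 * uxx z * uxy z + 2 * ux z * uxxy z + 2 * uxy z * uyy z + 2 * uy z * uxyy z) * EE z
   + (2 * ux z * uxy z + 2 * uy z * uyy z) * (2 * fst z * EE z)
   - ((2 * ux z * uxx z + 2 * uy z * uxy z) * EE z + ((ux z)^2 + (uy z)^2) * (2 * fst z * EE z))"
definition "Wyy z = (2 * uxy z * uxy z + 2 * ux z * uxyy z + 2 * uyy z * uyy z + 2 * uy z * uyyy z) * EE z
   - 2 * (2 * ux z * uxy z + 2 * uy z * uyy z) * EE z + ((ux z)^2 + (uy z)^2) * EE z"
definition "A1 z = Wy z / uy z"
definition "A1x z = (Wyx z * uy z - Wy z * uxy z) / (uy z)^2"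
definition "A1y z = (Wyy z * uy z - Wy z * uyy z) / (uy z)^2"
definition "A2 z = A1y z / uy z"
definition "BB z = (uxx z + uyy z) * EE z"
definition "Bx z = (uxxx z + uxyy z) * EE z + (uxx z + uyy z) * (2 * fst z * EE z)"
definition "By z = (uxxy z + uyyy z) * EE z - (uxx z + uyy z) * EE z"
definition "B1 z = By z / uy z"

lemma EE_pos: "EE z > 0" by (simp add: EE_def)

lemma dEEx: "((\<lambda>t. EE (t,y)) has_real_derivative (2 * x * EE (x,y))) (at x)"
  unfolding EE_def by (auto intro!: derivative_eq_intros)

lemma dEEy: "((\<lambda>t. EE (x,t)) has_real_derivative (- EE (x,y))) (at y)"
  unfolding EE_def by (auto intro!: derivative_eq_intros)

lemma dEExw: "((\<lambda>t. EE (t,y)) has_real_derivative (2 * x * EE (x,y))) (at x within A)"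
  using dEEx has_field_derivative_at_within by blast
lemma dEEyw: "((\<lambda>t. EE (x,t)) has_real_derivative (- EE (x,y))) (at y within A)"
  using dEEy has_field_derivative_at_within by blast

lemma dxs:
  "((\<lambda>t. ux (t,y)) has_real_derivative uxx (x,y)) (at x within A)"
  "((\<lambda>t. uy (t,y)) has_real_derivative uxy (x,y)) (at x within A)"
  "((\<lambda>t. uxx (t,y)) has_real_derivative uxxx (x,y)) (at x within A)"
  "((\<lambda>t. uxy (t,y)) has_real_derivative uxxy (x,y)) (at x within A)"
  "((\<lambda>t. uyy (t,y)) has_real_derivative uxyy (x,y)) (at x within A)"
  "((\<lambda>t. EE (t,y)) has_real_derivative (2 * x * EE (x,y))) (at x within A)"
  using Sm_dxw[OF Sms(2)] Sm_dxw[OF Sms(3)] Sm_dxw[OF Sms(4)] Sm_dxw[OF Sms(5)] Sm_dxw[OF Sms(6)] dEExw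
  by (auto simp: sym1 sym3)

lemma dys:
  "((\<lambda>t. ux (x,t)) has_real_derivative uxy (x,y)) (at y within A)"
  "((\<lambda>t. uy (x,t)) has_real_derivative uyy (x,y)) (at y within A)"
  "((\<lambda>t. uxx (x,t)) has_real_derivative uxxy (x,y)) (at y within A)"
  "((\<lambda>t. uxy (x,t)) has_real_derivative uxyy (x,y)) (at y within A)"
  "((\<lambda>t. uyy (x,t)) has_real_derivative uyyy (x,y)) (at y within A)"
  "((\<lambda>t. EE (x,t)) has_real_derivative (- EE (x,y))) (at y within A)"
  using Sm_dyw[OF Sms(2)] Sm_dyw[OF Sms(3)] Sm_dyw[OF Sms(4)] Sm_dyw[OF Sms(5)] Sm_dyw[OF Sms(6)] dEEyw
  by (auto simp: sym2)

lemma dWx: "((\<lambda>t. W (t,y)) has_real_derivative Wx (x,y)) (at x)"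
  unfolding W_def Wx_def
  by (auto intro!: derivative_eq_intros dxs simp: algebra_simps power2_eq_square)

lemma dWy: "((\<lambda>t. W (x,t)) has_real_derivative Wy (x,y)) (at y)"
  unfolding W_def Wy_def
  by (auto intro!: derivative_eq_intros dys simp: algebra_simps power2_eq_square)

lemma dWxx: "((\<lambda>t. Wx (t,y)) has_real_derivative Wxx (x,y)) (at x)"
  unfolding Wxx_def Wx_def
  by (auto intro!: derivative_eq_intros dxs simp: algebra_simps power2_eq_square)

lemma dWyx: "((\<lambda>t. Wy (t,y)) has_real_derivative Wyx (x,y)) (at x)"
  unfolding Wyx_def Wy_def
  by (auto intro!: derivative_eq_intros dxs simp: algebra_simps power2_eq_square)

lemma dWyy: "((\<lambda>t. Wy (x,t)) has_real_derivative Wyy (x,y)) (at y)"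
  unfolding Wyy_def Wy_def
  by (auto intro!: derivative_eq_intros dys simp: algebra_simps power2_eq_square)

lemma dBx: "((\<lambda>t. BB (t,y)) has_real_derivative Bx (x,y)) (at x)"
  unfolding BB_def Bx_def
  by (auto intro!: derivative_eq_intros dxs simp: algebra_simps)

lemma dBy: "((\<lambda>t. BB (x,t)) has_real_derivative By (x,y)) (at y)"
  unfolding BB_def By_def
  by (auto intro!: derivative_eq_intros dys simp: algebra_simps)

lemma LC_W: "LC W"
proof -
  have "W = (\<lambda>z. ((pdx u z)^2 + (pdy u z)^2) * exp ((fst z)^2 - snd z))"
    by (simp add: fun_eq_iff W_def EE_def)
  then show ?thesis using LCW by simp
qed

lemma LC_BB: "LC BB"
proof -
  have "BB = (\<lambda>z. (pdx (pdx u) z + pdy (pdy u) z) * exp ((fst z)^2 - snd z))"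
    by (simp add: fun_eq_iff BB_def EE_def)
  then show ?thesis using LCB by simp
qed

lemma uy_nz: "z \<in> S \<Longrightarrow> uy z \<noteq> 0"
  using S_q by fastforce

lemma step1: "LC A1" "\<And>z. z \<in> S \<Longrightarrow> Wx z = A1 z * ux z"
proof -
  have gx: "((\<lambda>t. W (t, snd z)) has_real_derivative Wx z) (at (fst z))" for z
    using dWx[of "snd z" "fst z"] by simp
  have gy: "((\<lambda>t. W (fst z, t)) has_real_derivative Wy z) (at (snd z))" for z
    using dWy[of "fst z" "snd z"] by simp
  show "LC A1" using LemD(1)[OF LC_W gx gy] unfolding A1_def[abs_def] .
  show "Wx z = A1 z * ux z" if "z \<in> S" for z
    using LemD(2)[OF LC_W gx gy that] unfolding A1_def .
qed

lemma dA1x: "z \<in> S \<Longrightarrow> ((\<lambda>t. A1 (t, snd z)) has_real_derivative A1x z) (at (fst z))"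
proof -
  assume z: "z \<in> S"
  obtain x y where zz: "z = (x,y)" by fastforce
  have "((\<lambda>t. Wy (t,y) / uy (t,y)) has_real_derivative
         (Wyx (x,y) * uy (x,y) - Wy (x,y) * uxy (x,y)) / (uy (x,y) * uy (x,y))) (at x)"
    by (rule DERIV_divide[OF dWyx dxs(2)]) (use uy_nz[OF z] zz in simp)
  then show ?thesis unfolding A1_def A1x_def zz by (simp add: power2_eq_square)
qed

lemma dA1y: "z \<in> S \<Longrightarrow> ((\<lambda>t. A1 (fst z, t)) has_real_derivative A1y z) (at (snd z))"
proof -
  assume z: "z \<in> S"
  obtain x y where zz: "z = (x,y)" by fastforce
  have "((\<lambda>t. Wy (x,t) / uy (x,t)) has_real_derivative
         (Wyy (x,y) * uy (x,y) - Wy (x,y) * uyy (x,y)) / (uy (x,y) * uy (x,y))) (at y)"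
    by (rule DERIV_divide[OF dWyy dys(2)]) (use uy_nz[OF z] zz in simp)
  then show ?thesis unfolding A1_def A1y_def zz by (simp add: power2_eq_square)
qed

lemma step2: "LC A2" "\<And>z. z \<in> S \<Longrightarrow> A1x z = A2 z * ux z"
proof -
  show "LC A2" using LemD(1)[OF step1(1) dA1x dA1y] unfolding A2_def[abs_def] .
  show "A1x z = A2 z * ux z" if "z \<in> S" for z
    using LemD(2)[OF step1(1) dA1x dA1y that] unfolding A2_def .
qed

lemma step3: "LC B1" "\<And>z. z \<in> S \<Longrightarrow> Bx z = B1 z * ux z"
proof -
  have gx: "((\<lambda>t. BB (t, snd z)) has_real_derivative Bx z) (at (fst z))" for z
    using dBx[of "snd z" "fst z"] by simp
  have gy: "((\<lambda>t. BB (fst z, t)) has_real_derivative By z) (at (snd z))" for z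
    using dBy[of "fst z" "snd z"] by simp
  show "LC B1" using LemD(1)[OF LC_BB gx gy] unfolding B1_def[abs_def] .
  show "Bx z = B1 z * ux z" if "z \<in> S" for z
    using LemD(2)[OF LC_BB gx gy that] unfolding B1_def .
qed

lemma step4: "z \<in> S \<Longrightarrow> Wxx z = A2 z * (ux z)^2 + A1 z * uxx z"
proof -
  assume z: "z \<in> S"
  obtain x y where zz: "z = (x,y)" by fastforce
  have F0: "\<And>z. z \<in> S \<Longrightarrow> Wx z - A1 z * ux z = 0" using step1(2) by simp
  have "((\<lambda>t. Wx (t, snd z) - A1 (t, snd z) * ux (t, snd z)) has_real_derivative
        Wxx z - (A1x z * ux z + A1 z * uxx z)) (at (fst z))"
    using dWxx[of y x] dA1x[OF z] dxs(1)[of y x UNIV] zz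
    by (auto intro!: derivative_eq_intros)
  from zero_dx[where F="\<lambda>z. Wx z - A1 z * ux z", OF F0 z this]
  show ?thesis using step2(2)[OF z] by (simp add: power2_eq_square algebra_simps)
qed

definition "KK z = ((2 * BB z - A1 z) * (A1 z - BB z)) / (2 * W z) - B1 z + A2 z / 2"

lemma LC_KK: "LC KK"
  using LC_W LC_BB step1(1) step2(1) step3(1) unfolding LC_def KK_def by metis

lemma KK_EE: "z \<in> S \<Longrightarrow> KK z = EE z"
proof -
  assume z: "z \<in> S"
  have q: "uy z \<noteq> 0" using uy_nz[OF z] .
  have w: "(ux z)^2 + (uy z)^2 \<noteq> 0" using q by (simp add: add_nonneg_eq_0_iff)
  have a1: "A1 z * uy z = (2 * ux z * uxy z + 2 * uy z * uyy z) * EE z - ((ux z)^2 + (uy z)^2) * EE z"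
    using q unfolding A1_def Wy_def by simp
  have a2: "A2 z * (uy z)^2 = (2 * uxy z * uxy z + 2 * ux z * uxyy z + 2 * uyy z * uyy z + 2 * uy z * uyyy z) * EE z
     - 2 * (2 * ux z * uxy z + 2 * uy z * uyy z) * EE z + ((ux z)^2 + (uy z)^2) * EE z - A1 z * uyy z"
    using q unfolding A2_def A1y_def A1_def Wyy_def[symmetric]
    by (simp add: field_simps power2_eq_square)
  have b1: "B1 z * uy z = (uxxy z + uyyy z) * EE z - (uxx z + uyy z) * EE z"
    using q unfolding B1_def By_def by simp
  have h1: "(2 * ux z * uxx z + 2 * uy z * uxy z) * EE z + ((ux z)^2 + (uy z)^2) * (2 * fst z * EE z) = A1 z * ux z"
    using step1(2)[OF z] unfolding Wx_def .
  have h2: "(2 * uxx z * uxx z + 2 * ux z * uxxx z + 2 * uxy z * uxy z + 2 * uy z * uxxy z) * EE z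
     + 2 * (2 * ux z * uxx z + 2 * uy z * uxy z) * (2 * fst z * EE z)
     + ((ux z)^2 + (uy z)^2) * (2 * EE z + 4 * fst z * fst z * EE z) = A2 z * (ux z)^2 + A1 z * uxx z"
    using step4[OF z] unfolding Wxx_def .
  have h3: "(uxxx z + uxyy z) * EE z + (uxx z + uyy z) * (2 * fst z * EE z) = B1 z * ux z"
    using step3(2)[OF z] unfolding Bx_def .
  have K: "(2 * ((uxx z + uyy z) * EE z) - A1 z) * (A1 z - (uxx z + uyy z) * EE z)
      + ((ux z)^2 + (uy z)^2) * EE z * (A2 z - 2 * B1 z) = 2 * (((ux z)^2 + (uy z)^2) * EE z) * EE z"
    by (rule K_alg[OF w a1 a2 b1 h1 h2 h3])
  have Wp: "W z \<noteq> 0" using w EE_pos[of z] unfolding W_def by simp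
  show "KK z = EE z"
    using K Wp unfolding KK_def BB_def[symmetric] W_def[symmetric]
    by (simp add: field_simps)
qed

lemma LC_EE: "LC EE"
  using LC_KK KK_EE unfolding LC_def by metis

lemma step6: "z \<in> S \<Longrightarrow> ux z = -2 * fst z * uy z"
proof -
  assume z: "z \<in> S"
  have gx: "((\<lambda>t. EE (t, snd z)) has_real_derivative 2 * fst z * EE z) (at (fst z))" for z
    using dEEx[of "snd z" "fst z"] by simp
  have gy: "((\<lambda>t. EE (fst z, t)) has_real_derivative - EE z) (at (snd z))" for z
    using dEEy[of "fst z" "snd z"] by simp
  have "2 * fst z * EE z = - EE z / uy z * ux z" using LemD(2)[OF LC_EE gx gy z] .
  then have "2 * fst z * EE z * uy z = - EE z * ux z" using uy_nz[OF z] by (simp add: field_simps)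
  then have "EE z * (ux z + 2 * fst z * uy z) = 0" by (simp add: algebra_simps)
  then have "ux z + 2 * fst z * uy z = 0" using EE_pos[of z] by simp
  then show ?thesis by simp
qed

lemma step7: "z \<in> S \<Longrightarrow> uxx z + 2 * uy z + 2 * fst z * uxy z = 0 \<and> uxy z + 2 * fst z * uyy z = 0"
proof -
  assume z: "z \<in> S"
  obtain x y where zz: "z = (x,y)" by fastforce
  have F0: "\<And>z. z \<in> S \<Longrightarrow> ux z + 2 * fst z * uy z = 0" using step6 by simp
  have "((\<lambda>t. ux (t, snd z) + 2 * fst (t, snd z) * uy (t, snd z)) has_real_derivative
        uxx z + (2 * uy z + 2 * fst z * uxy z)) (at (fst z))"
    using dxs(1)[of y x UNIV] dxs(2)[of y x UNIV] zz
    by (auto intro!: derivative_eq_intros)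
  from zero_dx[where F="\<lambda>z. ux z + 2 * fst z * uy z", OF F0 z this]
  have 1: "uxx z + 2 * uy z + 2 * fst z * uxy z = 0" by simp
  have "((\<lambda>t. ux (fst z, t) + 2 * fst (fst z, t) * uy (fst z, t)) has_real_derivative
        uxy z + 2 * fst z * uyy z) (at (snd z))"
    using dys(1)[of x y UNIV] dys(2)[of x y UNIV] zz
    by (auto intro!: derivative_eq_intros)
  from zero_dy[where F="\<lambda>z. ux z + 2 * fst z * uy z", OF F0 z this]
  have 2: "uxy z + 2 * fst z * uyy z = 0" by simp
  show ?thesis using 1 2 by simp
qed

lemma step8: "z \<in> S \<Longrightarrow> fst z = 0"
proof -
  assume z: "z \<in> S"
  have h1: "(2 * ux z * uxx z + 2 * uy z * uxy z) * EE z + ((ux z)^2 + (uy z)^2) * (2 * fst z * EE z) = A1 z * ux z"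
    using step1(2)[OF z] unfolding Wx_def .
  have a1: "A1 z * uy z = (2 * ux z * uxy z + 2 * uy z * uyy z) * EE z - ((ux z)^2 + (uy z)^2) * EE z"
    using uy_nz[OF z] unfolding A1_def Wy_def by simp
  show ?thesis
    by (rule fin_alg[OF uy_nz[OF z] _ h1 a1 step6[OF z]])
       (use EE_pos[of z] step7[OF z] in auto)
qed

lemma contradiction: False
proof -
  obtain d where d: "0 < d" "ball (x0,y0) d \<subseteq> S"
    using S_open z0S open_contains_ball by blast
  have "(x0 + d/2, y0) \<in> S" "(x0 - d/2, y0) \<in> S"
    using d by (auto simp: dist_Pair_Pair dist_real_def intro!: subsetD[OF d(2)])
  then have "x0 + d/2 = 0" "x0 - d/2 = 0" using step8 by force+
  then show False using d(1) by linarith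
qed

end


lemma dist_le_sum: "dist (x,y) (a,b) \<le> \<bar>x-a\<bar> + \<bar>y-b\<bar>"
  using sqrt_sum_squares_le_sum_abs[of "x-a" "y-b"] by (simp add: dist_Pair_Pair dist_real_def)

lemma box_exists:
  assumes Su: "Sm u" and q0: "pdy u (x0,y0) > 0"
  shows "\<exists>\<delta> \<epsilon> \<eta>. box u x0 y0 \<delta> \<epsilon> \<eta>"
proof -
  have "isCont (pdy u) (x0,y0)" using Sm_cont[OF Sm_dy[OF Su]] .
  then obtain d where d: "0 < d" "\<And>z. dist z (x0,y0) < d \<Longrightarrow> dist (pdy u z) (pdy u (x0,y0)) < pdy u (x0,y0)"
    using q0 unfolding continuous_at_eps_delta by blast
  define \<epsilon> where "\<epsilon> = d/3"
  have e: "0 < \<epsilon>" using d unfolding \<epsilon>_def by simp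
  have qpos: "pdy u (x,y) > 0" if "\<bar>x-x0\<bar> \<le> \<epsilon>" "\<bar>y-y0\<bar> \<le> \<epsilon>" for x y
  proof -
    have "dist (x,y) (x0,y0) < d" using dist_le_sum[of x y x0 y0] that d unfolding \<epsilon>_def by linarith
    from d(2)[OF this] show ?thesis by (simp add: dist_real_def abs_less_iff)
  qed
  define u0 where "u0 = u (x0,y0)"
  have vmono: "u (x0,y1) < u (x0,y2)" if "y0-\<epsilon> \<le> y1" "y1 < y2" "y2 \<le> y0+\<epsilon>" for y1 y2
  proof -
    have "(\<lambda>y. u (x0,y)) y1 < (\<lambda>y. u (x0,y)) y2"
    proof (rule DERIV_pos_imp_increasing[OF that(2)])
      fix y assume "y1 \<le> y" "y \<le> y2"
      then show "\<exists>D. DERIV (\<lambda>y. u (x0,y)) y :> D \<and> D > 0"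
        using Sm_hasy[OF Su] qpos[of x0 y] that e by (intro exI[of _ "pdy u (x0,y)"]) auto
    qed
    then show ?thesis by simp
  qed
  have l: "u (x0,y0-\<epsilon>) < u0" and h: "u0 < u (x0,y0+\<epsilon>)"
    using vmono[of "y0-\<epsilon>" y0] vmono[of y0 "y0+\<epsilon>"] e unfolding u0_def by auto
  define \<eta> where "\<eta> = min (u0 - u (x0,y0-\<epsilon>)) (u (x0,y0+\<epsilon>) - u0) / 2"
  have eta: "0 < \<eta>" "2*\<eta> \<le> u0 - u (x0,y0-\<epsilon>)" "2*\<eta> \<le> u (x0,y0+\<epsilon>) - u0"
    using l h unfolding \<eta>_def by auto
  obtain d1 where d1: "0 < d1" "\<And>x. dist x x0 < d1 \<Longrightarrow> dist (u (x,y0-\<epsilon>)) (u (x0,y0-\<epsilon>)) < \<eta>"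
    using Sm_isCont_x[OF Su, of x0 "y0-\<epsilon>"] eta(1) unfolding continuous_at_eps_delta by blast
  obtain d2 where d2: "0 < d2" "\<And>x. dist x x0 < d2 \<Longrightarrow> dist (u (x,y0+\<epsilon>)) (u (x0,y0+\<epsilon>)) < \<eta>"
    using Sm_isCont_x[OF Su, of x0 "y0+\<epsilon>"] eta(1) unfolding continuous_at_eps_delta by blast
  define \<delta> where "\<delta> = min \<epsilon> (min d1 d2) / 2"
  have dl: "0 < \<delta>" "\<delta> \<le> \<epsilon>" "\<delta> < d1" "\<delta> < d2" using e d1 d2 unfolding \<delta>_def by auto
  have "box u x0 y0 \<delta> \<epsilon> \<eta>"
  proof
    show "Sm u" by (rule Su)
    show "0 < \<delta>" "0 < \<epsilon>" "0 < \<eta>" using dl e eta by auto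
    show "pdy u (x,y) > 0" if "\<bar>x-x0\<bar> \<le> \<delta>" "\<bar>y-y0\<bar> \<le> \<epsilon>" for x y
      using qpos that dl by auto
    show "u (x, y0-\<epsilon>) < u (x0,y0) - \<eta>" if "\<bar>x-x0\<bar> \<le> \<delta>" for x
    proof -
      have "dist x x0 < d1" using that dl by (simp add: dist_real_def)
      from d1(2)[OF this] show ?thesis using eta unfolding u0_def dist_real_def by (simp add: abs_less_iff)
    qed
    show "u (x, y0+\<epsilon>) > u (x0,y0) + \<eta>" if "\<bar>x-x0\<bar> \<le> \<delta>" for x
    proof -
      have "dist x x0 < d2" using that dl by (simp add: dist_real_def)
      from d2(2)[OF this] show ?thesis using eta unfolding u0_def dist_real_def by (simp add: abs_less_iff)
    qed
  qed
  then show ?thesis by blast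
qed

lemma core:
  assumes Su: "Sm u"
  and EQ: "\<And>z1 z2. connected_component {z. u z = u z1} z1 z2 \<Longrightarrow>
      ((pdx u z2)^2 + (pdy u z2)^2) * exp ((fst z2)^2 - snd z2) = ((pdx u z1)^2 + (pdy u z1)^2) * exp ((fst z1)^2 - snd z1) \<and>
      (pdx (pdx u) z2 + pdy (pdy u) z2) * exp ((fst z2)^2 - snd z2) = (pdx (pdx u) z1 + pdy (pdy u) z1) * exp ((fst z1)^2 - snd z1)"
  and q0: "pdy u z0 > 0"
  shows False
proof -
  obtain x0 y0 where z0: "z0 = (x0,y0)" by fastforce
  obtain \<delta> \<epsilon> \<eta> where B: "box u x0 y0 \<delta> \<epsilon> \<eta>" using box_exists[OF Su] q0 z0 by blast
  interpret box u x0 y0 \<delta> \<epsilon> \<eta> by (rule B)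
  have "eqbox u x0 y0 \<delta> \<epsilon> \<eta>"
  proof
    show "LC (\<lambda>z. ((pdx u z)^2 + (pdy u z)^2) * exp ((fst z)^2 - snd z))"
      unfolding LC_def using conn EQ by metis
    show "LC (\<lambda>z. (pdx (pdx u) z + pdy (pdy u) z) * exp ((fst z)^2 - snd z))"
      unfolding LC_def using conn EQ by metis
  qed
  then show False by (rule eqbox.contradiction)
qed


lemma gs_eq:
  "grad_sq (\<lambda>(x, y). exp (y - x\<^sup>2)) (\<lambda>_. 0) (\<lambda>(x, y). exp (y - x\<^sup>2)) I =
   (\<lambda>z. ((pdx I z)^2 + (pdy I z)^2) * exp ((fst z)^2 - snd z))"
proof (rule ext)
  fix z :: "real \<times> real"
  obtain x y where z: "z = (x,y)" by fastforce
  have e: "exp ((fst z)^2 - snd z) = inverse (exp (y - x^2))" using z by (simp add: exp_minus[symmetric])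
  show "grad_sq (\<lambda>(x, y). exp (y - x\<^sup>2)) (\<lambda>_. 0) (\<lambda>(x, y). exp (y - x\<^sup>2)) I z =
     ((pdx I z)^2 + (pdy I z)^2) * exp ((fst z)^2 - snd z)"
    unfolding e unfolding grad_sq_def metric_det_def z
    by (simp add: field_simps power2_eq_square)
qed

lemma lb_eq:
  "laplace_beltrami (\<lambda>(x, y). exp (y - x\<^sup>2)) (\<lambda>_. 0) (\<lambda>(x, y). exp (y - x\<^sup>2)) I =
   (\<lambda>z. (pdx (pdx I) z + pdy (pdy I) z) * exp ((fst z)^2 - snd z))"
proof -
  let ?E = "\<lambda>(x::real, y::real). exp (y - x\<^sup>2)"
  have sq: "sqrt (metric_det ?E (\<lambda>_. 0) ?E q) = ?E q" for q
  proof -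
    obtain a b where q: "q = (a,b)" by fastforce
    show ?thesis unfolding metric_det_def q by (simp add: power2_eq_square[symmetric])
  qed
  have i1: "(\<lambda>q. sqrt (metric_det ?E (\<lambda>_. 0) ?E q) *
              ((?E q * pdx I q - 0 * pdy I q) / metric_det ?E (\<lambda>_. 0) ?E q)) = pdx I"
  proof (rule ext)
    fix q :: "real \<times> real"
    obtain a b where q: "q = (a,b)" by fastforce
    show "sqrt (metric_det ?E (\<lambda>_. 0) ?E q) * ((?E q * pdx I q - 0 * pdy I q) / metric_det ?E (\<lambda>_. 0) ?E q) = pdx I q"
      unfolding sq unfolding metric_det_def q by simp
  qed
  have i2: "(\<lambda>q. sqrt (metric_det ?E (\<lambda>_. 0) ?E q) *
              ((- 0 * pdx I q + ?E q * pdy I q) / metric_det ?E (\<lambda>_. 0) ?E q)) = pdy I"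
  proof (rule ext)
    fix q :: "real \<times> real"
    obtain a b where q: "q = (a,b)" by fastforce
    show "sqrt (metric_det ?E (\<lambda>_. 0) ?E q) * ((- 0 * pdx I q + ?E q * pdy I q) / metric_det ?E (\<lambda>_. 0) ?E q) = pdy I q"
      unfolding sq unfolding metric_det_def q by simp
  qed
  show ?thesis
  proof (rule ext)
    fix z :: "real \<times> real"
    obtain x y where z: "z = (x,y)" by fastforce
    have e: "exp ((fst z)^2 - snd z) = inverse (exp (y - x^2))" using z by (simp add: exp_minus[symmetric])
    show "laplace_beltrami ?E (\<lambda>_. 0) ?E I z = (pdx (pdx I) z + pdy (pdy I) z) * exp ((fst z)^2 - snd z)"
      unfolding laplace_beltrami_def i1 i2 unfolding sq e by (simp add: z divide_inverse)
  qed
qed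

theorem mainTheorem6:
  fixes I :: "real \<times> real \<Rightarrow> real"
  assumes "equilibrium_function
             (\<lambda>(x, y). exp (y - x\<^sup>2)) (\<lambda>_. 0) (\<lambda>(x, y). exp (y - x\<^sup>2)) I"
  shows "\<exists>k. \<forall>p. I p = k"
proof -
  have RA: "real_analytic2 I" and EQ0: "\<And>c p q. p \<in> {z. I z = c} \<Longrightarrow> q \<in> connected_component_set {z. I z = c} p \<Longrightarrow>
        grad_sq (\<lambda>(x, y). exp (y - x\<^sup>2)) (\<lambda>_. 0) (\<lambda>(x, y). exp (y - x\<^sup>2)) I q =
        grad_sq (\<lambda>(x, y). exp (y - x\<^sup>2)) (\<lambda>_. 0) (\<lambda>(x, y). exp (y - x\<^sup>2)) I p \<and>
        laplace_beltrami (\<lambda>(x, y). exp (y - x\<^sup>2)) (\<lambda>_. 0) (\<lambda>(x, y). exp (y - x\<^sup>2)) I q =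
        laplace_beltrami (\<lambda>(x, y). exp (y - x\<^sup>2)) (\<lambda>_. 0) (\<lambda>(x, y). exp (y - x\<^sup>2)) I p"
    using assms unfolding equilibrium_function_def by blast+
  have Su: "Sm I" by (rule analytic_Sm[OF RA])
  have EQ: "((pdx I z2)^2 + (pdy I z2)^2) * exp ((fst z2)^2 - snd z2) = ((pdx I z1)^2 + (pdy I z1)^2) * exp ((fst z1)^2 - snd z1) \<and>
      (pdx (pdx I) z2 + pdy (pdy I) z2) * exp ((fst z2)^2 - snd z2) = (pdx (pdx I) z1 + pdy (pdy I) z1) * exp ((fst z1)^2 - snd z1)"
    if cc: "connected_component {z. I z = I z1} z1 z2" for z1 z2
    using EQ0[of z1 "I z1" z2] cc unfolding gs_eq lb_eq by simp
  show ?thesis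
  proof (cases "\<exists>z0. pdy I z0 \<noteq> 0")
    case True
    then obtain z0 where z0: "pdy I z0 \<noteq> 0" by blast
    show ?thesis
    proof (cases "pdy I z0 > 0")
      case True
      then show ?thesis using core[OF Su EQ] by blast
    next
      case False
      define J where "J = (\<lambda>z. - I z)"
      have SJ: "Sm J" unfolding J_def by (rule Sm_neg[OF Su])
      have Jx: "pdx J = (\<lambda>z. - pdx I z)" unfolding J_def by (rule Sm_neg_pdx[OF Su])
      have Jy: "pdy J = (\<lambda>z. - pdy I z)" unfolding J_def by (rule Sm_neg_pdy[OF Su])
      have Jxx: "pdx (pdx J) = (\<lambda>z. - pdx (pdx I) z)" unfolding Jx by (rule Sm_neg_pdx[OF Sm_dx[OF Su]])
      have Jyy: "pdy (pdy J) = (\<lambda>z. - pdy (pdy I) z)" unfolding Jy by (rule Sm_neg_pdy[OF Sm_dy[OF Su]])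
      have lev: "{z. J z = J z1} = {z. I z = I z1}" for z1 unfolding J_def by auto
      have EQJ: "((pdx J z2)^2 + (pdy J z2)^2) * exp ((fst z2)^2 - snd z2) = ((pdx J z1)^2 + (pdy J z1)^2) * exp ((fst z1)^2 - snd z1) \<and>
        (pdx (pdx J) z2 + pdy (pdy J) z2) * exp ((fst z2)^2 - snd z2) = (pdx (pdx J) z1 + pdy (pdy J) z1) * exp ((fst z1)^2 - snd z1)"
        if cc: "connected_component {z. J z = J z1} z1 z2" for z1 z2
      proof -
        have "connected_component {z. I z = I z1} z1 z2" using cc lev by simp
        from EQ[OF this] show ?thesis unfolding Jxx Jyy unfolding Jx Jy by (simp add: algebra_simps)
      qed
      have "pdy J z0 > 0" using False z0 Jy by simp
      then show ?thesis using core[OF SJ EQJ] by blast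
    qed
  next
    case False
    then have q0: "\<And>z. pdy I z = 0" by blast
    have vc: "I (x,y) = I (x,0)" for x y
    proof -
      have "\<forall>t. DERIV (\<lambda>t. I (x,t)) t :> 0" using Sm_hasy[OF Su, of x] q0 by metis
      then show ?thesis by (rule DERIV_isconst_all)
    qed
    have px: "pdx I (x,y) = pdx I (x,0)" for x y
    proof -
      have "(\<lambda>t. I (t, y)) = (\<lambda>t. I (t, 0))" using vc by (simp add: fun_eq_iff)
      then show ?thesis unfolding pdx_def by simp
    qed
    have p0: "pdx I (x,0) = 0" for x
    proof -
      define L where "L = (\<lambda>y. (x,y)) ` (UNIV :: real set)"
      have Lc: "connected L" unfolding L_def
        by (intro connected_continuous_image continuous_intros connected_UNIV)
      have Ls: "L \<subseteq> {z. I z = I (x,0)}" unfolding L_def using vc by auto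
      have "connected_component {z. I z = I (x,0)} (x,0) (x,1)"
        by (rule connected_componentI[OF Lc Ls]) (auto simp: L_def)
      from EQ[OF this] have "(pdx I (x,1))^2 * exp (x^2 - 1) = (pdx I (x,0))^2 * exp (x^2)"
        using q0 by simp
      then have "(pdx I (x,0))^2 * (exp (x^2 - 1) - exp (x^2)) = 0"
        using px[of x 1] by (simp add: algebra_simps)
      moreover have "exp (x^2 - 1) \<noteq> exp (x^2)" by simp
      ultimately show ?thesis by simp
    qed
    have hc: "I (x,0) = I (0,0)" for x
    proof -
      have "\<forall>t. DERIV (\<lambda>t. I (t,0)) t :> 0" using Sm_hasx[OF Su, of 0] p0 by metis
      then show ?thesis by (rule DERIV_isconst_all)
    qed
    show ?thesis
    proof (intro exI allI)
      fix z :: "real \<times> real"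
      obtain x y where "z = (x,y)" by fastforce
      then show "I z = I (0,0)" using vc[of x y] hc[of x] by simp
    qed
  qed
qed

end
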